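(* For any distribution $F$ on $[0,\infty)$, any arrivals $0<\sigma_1<\cdots<\sigma_m$, and any probability vectors $\mathbf p_1=(p_{11},\dots,p_{1m})$, $\mathbf p_2=(p_{21},\dots,p_{2m})\in[0,1]^m$ with $p_{1t}\le p_{2t}$ for every $t\in[m]$, we have $r(F,\boldsymbol\sigma,\mathbf p_1)\le r(F,\boldsymbol\sigma,\mathbf p_2)$.
   Context: Random $(F,\boldsymbol\sigma,\mathbf p)$ process: a single unit of a resource starts at time $0$ available. If the unit is available just prior to $\sigma_t$, then with probability $p_t$ (independently) it becomes in-use for a duration $d$ drawn independently from $F$, i.e. in use on $(\sigma_t,\sigma_t+d)$, available again at $\sigma_t+d$. Each switch from available to in-use earns reward $1$; $r(F,\boldsymbol\sigma,\mathbf p)$ is the expected total reward. *)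

theory Defs
  imports "HOL-Probability.Probability"
begin

text \<open>Sample outcome at arrival t (0-indexed): a pair (coin, duration), where the coin is
  True with probability p t (the unit would become in-use if available) and the duration is
  drawn from F.\<close>

fun run_process :: "(nat \<Rightarrow> real) \<Rightarrow> (nat \<Rightarrow> bool \<times> real) \<Rightarrow> nat \<Rightarrow> real \<times> nat" where
  "run_process \<sigma> \<omega> 0 = (0, 0)"
| "run_process \<sigma> \<omega> (Suc k) =
     (let (a, c) = run_process \<sigma> \<omega> k in
        if a \<le> \<sigma> k \<and> fst (\<omega> k) then (\<sigma> k + snd (\<omega> k), Suc c) else (a, c))"

text \<open>First component: the time from which the unit is available again; second component:
  number of switches from available to in-use among the first k arrivals.\<close>

definition process_space :: "real measure \<Rightarrow> nat \<Rightarrow> (nat \<Rightarrow> real) \<Rightarrow> (nat \<Rightarrow> bool \<times> real) measure" where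
  "process_space F m p =
     PiM {..<m} (\<lambda>t. measure_pmf (bernoulli_pmf (p t)) \<Otimes>\<^sub>M F)"

definition expected_reward :: "real measure \<Rightarrow> nat \<Rightarrow> (nat \<Rightarrow> real) \<Rightarrow> (nat \<Rightarrow> real) \<Rightarrow> real" where
  "expected_reward F m \<sigma> p =
     (\<integral>\<omega>. real (snd (run_process \<sigma> \<omega> m)) \<partial>(process_space F m p))"

end

theory Submission
  imports Defs
begin


fun R :: "(nat \<Rightarrow> real) \<Rightarrow> nat \<Rightarrow> nat \<Rightarrow> real \<Rightarrow> (nat \<Rightarrow> bool \<times> real) \<Rightarrow> real" where
  "R \<sigma> k 0 a \<omega> = 0"
| "R \<sigma> k (Suc n) a \<omega> = (if a \<le> \<sigma> k \<and> fst (\<omega> k) then 1 + R \<sigma> (Suc k) n (\<sigma> k + snd (\<omega> k)) \<omega> else R \<sigma> (Suc k) n a \<omega>)"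

definition MM :: "real measure \<Rightarrow> (nat \<Rightarrow> real) \<Rightarrow> nat \<Rightarrow> (bool \<times> real) measure" where
  "MM F p k = measure_pmf (bernoulli_pmf (p k)) \<Otimes>\<^sub>M F"

lemma snd_meas:
  assumes "sets F = sets borel" "k \<in> I"
  shows "(\<lambda>\<omega>. snd (\<omega> k)) \<in> borel_measurable (PiM I (MM F p))"
proof -
  have "(\<lambda>\<omega>. \<omega> k) \<in> measurable (PiM I (MM F p)) (MM F p k)"
    using assms(2) by (rule measurable_component_singleton)
  moreover have "snd \<in> measurable (MM F p k) borel"
    unfolding MM_def using measurable_snd[of "measure_pmf (bernoulli_pmf (p k))" F]
      measurable_cong_sets[OF refl assms(1), of "measure_pmf (bernoulli_pmf (p k)) \<Otimes>\<^sub>M F"]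
    by (simp only:)
  ultimately show ?thesis by (rule measurable_compose)
qed

lemma fst_meas:
  assumes "k \<in> I"
  shows "Measurable.pred (PiM I (MM F p)) (\<lambda>\<omega>. fst (\<omega> k))"
proof -
  have "(\<lambda>\<omega>. \<omega> k) \<in> measurable (PiM I (MM F p)) (MM F p k)"
    using assms by (rule measurable_component_singleton)
  moreover have "fst \<in> measurable (MM F p k) (count_space UNIV)"
    unfolding MM_def using measurable_fst[of "measure_pmf (bernoulli_pmf (p k))" F]
      measurable_cong_sets[OF refl, of "measure_pmf (bernoulli_pmf (p k))" "count_space UNIV" "measure_pmf (bernoulli_pmf (p k)) \<Otimes>\<^sub>M F"]
    by simp
  ultimately show ?thesis by (rule measurable_compose)
qed

lemma R_meas:
  assumes "sets F = sets borel" "{k..<k+n} \<subseteq> I" "g \<in> borel_measurable (PiM I (MM F p))"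
  shows "(\<lambda>\<omega>. R \<sigma> k n (g \<omega>) \<omega>) \<in> borel_measurable (PiM I (MM F p))"
  using assms(2,3)
proof (induction n arbitrary: k g)
  case 0
  then show ?case by simp
next
  case (Suc n)
  have kI: "k \<in> I" using Suc.prems by auto
  have sub: "{Suc k..<Suc k+n} \<subseteq> I" using Suc.prems by auto
  have [measurable]: "g \<in> borel_measurable (PiM I (MM F p))" by fact
  have [measurable]: "(\<lambda>\<omega>. snd (\<omega> k)) \<in> borel_measurable (PiM I (MM F p))"
    using snd_meas[OF assms(1) kI] .
  have [measurable]: "Measurable.pred (PiM I (MM F p)) (\<lambda>\<omega>. fst (\<omega> k))"
    using fst_meas[OF kI] .
  have [measurable]: "(\<lambda>\<omega>. R \<sigma> (Suc k) n (\<sigma> k + snd (\<omega> k)) \<omega>) \<in> borel_measurable (PiM I (MM F p))"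
    by (rule Suc.IH[OF sub]) measurable
  have [measurable]: "(\<lambda>\<omega>. R \<sigma> (Suc k) n (g \<omega>) \<omega>) \<in> borel_measurable (PiM I (MM F p))"
    by (rule Suc.IH[OF sub]) measurable
  show ?case by simp measurable
qed

lemma R_upd: "j < k \<Longrightarrow> R \<sigma> k n a ((fun_upd \<omega> j y)) = R \<sigma> k n a \<omega>"
  by (induction n arbitrary: k a) auto

lemma R_nonneg: "0 \<le> R \<sigma> k n a \<omega>"
  by (induction n arbitrary: k a) auto

lemma R_le: "R \<sigma> k n a \<omega> \<le> n"
proof (induction n arbitrary: k a)
  case (Suc n)
  have "R \<sigma> (Suc k) n b \<omega> \<le> n" for b by (rule Suc.IH)
  then show ?case by (simp add: ) (smt (verit))
qed simp

definition W :: "real measure \<Rightarrow> (nat \<Rightarrow> real) \<Rightarrow> (nat \<Rightarrow> real) \<Rightarrow> nat \<Rightarrow> nat \<Rightarrow> real \<Rightarrow> ennreal" where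
  "W F p \<sigma> m k a = (\<integral>\<^sup>+ \<omega>. ennreal (R \<sigma> k (m-k) a \<omega>) \<partial>PiM {k..<m} (MM F p))"

lemma W_end: "m \<le> k \<Longrightarrow> W F p \<sigma> m k a = 0"
  by (simp add: W_def)

lemma MM_prob: "prob_space F \<Longrightarrow> prob_space (MM F p k)"
  unfolding MM_def by (intro prob_space_pair prob_space_measure_pmf)


lemma W_rec:
  assumes F: "prob_space F" "sets F = sets borel" and k: "k < m" and p: "0 \<le> p k" "p k \<le> 1"
  shows "W F p \<sigma> m k a = (if a \<le> \<sigma> k then ennreal (p k) * (\<integral>\<^sup>+ D. (1 + W F p \<sigma> m (Suc k) (\<sigma> k + D)) \<partial>F)
            + ennreal (1 - p k) * W F p \<sigma> m (Suc k) a else W F p \<sigma> m (Suc k) a)"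
proof -
  interpret P: product_prob_space "MM F p" "{}"
    by (rule product_prob_spaceI) (rule MM_prob[OF F(1)])
  interpret PF: prob_space F by fact
  interpret PS: prob_space "PiM {Suc k..<m} (MM F p)"
    by (rule prob_space_PiM) (rule MM_prob[OF F(1)])
  define n where "n = m - Suc k"
  have mk: "m - k = Suc n" using k n_def by auto
  have ins: "{k..<m} = insert k {Suc k..<m}" using k by auto
  define f where "f = (\<lambda>\<omega>. ennreal (R \<sigma> k (Suc n) a \<omega>))"
  have fm[measurable]: "f \<in> borel_measurable (PiM (insert k {Suc k..<m}) (MM F p))"
    unfolding f_def
    by (rule measurable_compose[OF R_meas[OF F(2), where g="\<lambda>_. a"]]) (auto simp: n_def)
  have Rm: "\<And>b. (\<lambda>x. ennreal (R \<sigma> (Suc k) n b x)) \<in> borel_measurable (PiM {Suc k..<m} (MM F p))"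
    by (rule measurable_compose[OF R_meas[OF F(2)]]) (auto simp: n_def)
  have Wsk: "\<And>b. W F p \<sigma> m (Suc k) b = (\<integral>\<^sup>+ x. ennreal (R \<sigma> (Suc k) n b x) \<partial>PiM {Suc k..<m} (MM F p))"
    by (simp add: W_def n_def)
  define h where "h = (\<lambda>y::bool\<times>real. if a \<le> \<sigma> k \<and> fst y then 1 + W F p \<sigma> m (Suc k) (\<sigma> k + snd y) else W F p \<sigma> m (Suc k) a)"
  have inner: "(\<integral>\<^sup>+ x. f (x(k := y)) \<partial>PiM {Suc k..<m} (MM F p)) = h y" for y
  proof -
    have "\<And>x. f (x(k := y)) = (if a \<le> \<sigma> k \<and> fst y then 1 + ennreal (R \<sigma> (Suc k) n (\<sigma> k + snd y) x) else ennreal (R \<sigma> (Suc k) n a x))"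
      by (simp add: f_def R_upd ennreal_plus R_nonneg)
    then have "(\<integral>\<^sup>+ x. f (x(k := y)) \<partial>PiM {Suc k..<m} (MM F p)) = (\<integral>\<^sup>+ x. (if a \<le> \<sigma> k \<and> fst y then 1 + ennreal (R \<sigma> (Suc k) n (\<sigma> k + snd y) x) else ennreal (R \<sigma> (Suc k) n a x)) \<partial>PiM {Suc k..<m} (MM F p))"
      by simp
    also have "\<dots> = h y"
    proof (cases "a \<le> \<sigma> k \<and> fst y")
      case True
      then show ?thesis
        by (simp only: if_P h_def Wsk) (simp add: nn_integral_add Rm PS.emeasure_space_1)
    next
      case False
      then show ?thesis
        by (simp only: if_not_P if_False h_def Wsk)
    qed
    finally show ?thesis .
  qed
  have "W F p \<sigma> m k a = integral\<^sup>N (PiM (insert k {Suc k..<m}) (MM F p)) f"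
    by (simp add: W_def mk f_def ins)
  also have "\<dots> = (\<integral>\<^sup>+ y. (\<integral>\<^sup>+ x. f (x(k := y)) \<partial>PiM {Suc k..<m} (MM F p)) \<partial>MM F p k)"
    by (rule P.product_nn_integral_insert_rev) (auto simp: fm)
  also have "\<dots> = (\<integral>\<^sup>+ y. h y \<partial>MM F p k)"
    by (simp add: inner)
  also have "\<dots> = (\<integral>\<^sup>+ b. (\<integral>\<^sup>+ D. h (b, D) \<partial>F) \<partial>measure_pmf (bernoulli_pmf (p k)))"
  proof -
    have "(\<lambda>y. \<integral>\<^sup>+ x. f (x(k := y)) \<partial>PiM {Suc k..<m} (MM F p)) \<in> borel_measurable (MM F p k)"
      by measurable
    then have hm: "h \<in> borel_measurable (measure_pmf (bernoulli_pmf (p k)) \<Otimes>\<^sub>M F)"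
      by (simp add: inner MM_def)
    show ?thesis unfolding MM_def by (rule PF.nn_integral_fst[OF hm, symmetric])
  qed
  also have "\<dots> = (\<integral>\<^sup>+ b. (if a \<le> \<sigma> k \<and> b then (\<integral>\<^sup>+ D. (1 + W F p \<sigma> m (Suc k) (\<sigma> k + D)) \<partial>F) else W F p \<sigma> m (Suc k) a) \<partial>measure_pmf (bernoulli_pmf (p k)))"
    by (rule nn_integral_cong) (auto simp: h_def PF.emeasure_space_1)
  also have "\<dots> = (\<Sum>b\<in>UNIV. (if a \<le> \<sigma> k \<and> b then (\<integral>\<^sup>+ D. (1 + W F p \<sigma> m (Suc k) (\<sigma> k + D)) \<partial>F) else W F p \<sigma> m (Suc k) a) * pmf (bernoulli_pmf (p k)) b)"
    by (rule nn_integral_measure_pmf_support) auto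
  also have "\<dots> = (if a \<le> \<sigma> k then ennreal (p k) * (\<integral>\<^sup>+ D. (1 + W F p \<sigma> m (Suc k) (\<sigma> k + D)) \<partial>F)
            + ennreal (1 - p k) * W F p \<sigma> m (Suc k) a else W F p \<sigma> m (Suc k) a)"
  proof -
    have e: "ennreal (p k) + ennreal (1 - p k) = 1" using p by (simp flip: ennreal_plus)
    show ?thesis
    proof (cases "a \<le> \<sigma> k")
      case True
      then show ?thesis using p by (simp add: UNIV_bool mult.commute)
    next
      case False
      then have "(\<Sum>b\<in>UNIV. (if a \<le> \<sigma> k \<and> b then (\<integral>\<^sup>+ D. (1 + W F p \<sigma> m (Suc k) (\<sigma> k + D)) \<partial>F) else W F p \<sigma> m (Suc k) a) * pmf (bernoulli_pmf (p k)) b)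
         = W F p \<sigma> m (Suc k) a * (ennreal (p k) + ennreal (1 - p k))"
        using p by (simp add: UNIV_bool distrib_left)
      then show ?thesis using False e by simp
    qed
  qed
  finally show ?thesis .
qed



lemma mix_le:
  fixes X Q :: ennreal
  assumes "0 \<le> p" "p \<le> 1" "X \<le> Q"
  shows "ennreal p * Q + ennreal (1 - p) * X \<le> Q"
proof -
  have "ennreal p * Q + ennreal (1 - p) * X \<le> ennreal p * Q + ennreal (1 - p) * Q"
    using assms(3) by (intro add_mono mult_left_mono) auto
  also have "\<dots> = (ennreal p + ennreal (1 - p)) * Q" by (simp add: distrib_right)
  also have "ennreal p + ennreal (1 - p) = 1" using assms by (simp flip: ennreal_plus)
  finally show ?thesis by simp
qed

lemma mix_ge:
  fixes X Q :: ennreal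
  assumes "0 \<le> p" "p \<le> 1" "X \<le> Q"
  shows "X \<le> ennreal p * Q + ennreal (1 - p) * X"
proof -
  have "ennreal p + ennreal (1 - p) = 1" using assms by (simp flip: ennreal_plus)
  then have "X = ennreal p * X + ennreal (1 - p) * X" by (metis distrib_right mult_1)
  also have "\<dots> \<le> ennreal p * Q + ennreal (1 - p) * X"
    using assms(3) by (intro add_mono mult_left_mono) auto
  finally show ?thesis .
qed

lemma mix_mono:
  fixes X Q :: ennreal
  assumes "0 \<le> p1" "p1 \<le> p2" "p2 \<le> 1" "X \<le> Q"
  shows "ennreal p1 * Q + ennreal (1 - p1) * X \<le> ennreal p2 * Q + ennreal (1 - p2) * X"
proof -
  have "ennreal (1 - p1) = ennreal (p2 - p1) + ennreal (1 - p2)" using assms by (simp flip: ennreal_plus)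
  then have "ennreal p1 * Q + ennreal (1 - p1) * X = ennreal p1 * Q + ennreal (p2 - p1) * X + ennreal (1 - p2) * X"
    by (simp add: distrib_right add.assoc)
  also have "\<dots> \<le> ennreal p1 * Q + ennreal (p2 - p1) * Q + ennreal (1 - p2) * X"
    using assms(4) by (intro add_mono mult_left_mono) auto
  also have "ennreal p1 * Q + ennreal (p2 - p1) * Q = ennreal p2 * Q"
    using assms by (simp add: distrib_right[symmetric] flip: ennreal_plus)
  finally show ?thesis .
qed

lemma MK:
  assumes F: "prob_space F" "sets F = sets borel"
    and sig: "\<And>t. Suc t < m \<Longrightarrow> \<sigma> t < \<sigma> (Suc t)"
    and p: "\<And>t. t < m \<Longrightarrow> 0 \<le> p t \<and> p t \<le> 1"
    and k: "k \<le> m"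
  shows "(\<forall>a b. a \<le> b \<longrightarrow> W F p \<sigma> m k b \<le> W F p \<sigma> m k a) \<and>
         (\<forall>x s. x \<le> s \<longrightarrow> (k < m \<longrightarrow> s \<le> \<sigma> k) \<longrightarrow> W F p \<sigma> m k x \<le> (\<integral>\<^sup>+ D. (1 + W F p \<sigma> m k (s + D)) \<partial>F))"
  using k
proof (induction "m - k" arbitrary: k)
  case 0
  then have "m \<le> k" by simp
  then show ?case by (simp add: W_end)
next
  case (Suc j)
  then have km: "k < m" by simp
  have pk: "0 \<le> p k" "p k \<le> 1" using p[OF km] by auto
  have IH: "(\<forall>a b. a \<le> b \<longrightarrow> W F p \<sigma> m (Suc k) b \<le> W F p \<sigma> m (Suc k) a) \<and>
         (\<forall>x s. x \<le> s \<longrightarrow> (Suc k < m \<longrightarrow> s \<le> \<sigma> (Suc k)) \<longrightarrow> W F p \<sigma> m (Suc k) x \<le> (\<integral>\<^sup>+ D. (1 + W F p \<sigma> m (Suc k) (s + D)) \<partial>F))"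
    using Suc by (intro Suc.hyps) auto
  define V where "V = W F p \<sigma> m k"
  define V1 where "V1 = W F p \<sigma> m (Suc k)"
  define Q where "Q = (\<integral>\<^sup>+ D. (1 + V1 (\<sigma> k + D)) \<partial>F)"
  have rec: "\<And>a. V a = (if a \<le> \<sigma> k then ennreal (p k) * Q + ennreal (1 - p k) * V1 a else V1 a)"
    unfolding V_def V1_def Q_def using W_rec[OF F km, of p, OF pk] by blast
  have M1: "\<And>a b. a \<le> b \<Longrightarrow> V1 b \<le> V1 a" using IH V1_def by blast
  have K1: "\<And>x. x \<le> \<sigma> k \<Longrightarrow> V1 x \<le> Q"
  proof -
    fix x assume "x \<le> \<sigma> k"
    moreover have "Suc k < m \<longrightarrow> \<sigma> k \<le> \<sigma> (Suc k)" using sig less_imp_le by blast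
    ultimately show "V1 x \<le> Q" using IH unfolding V1_def Q_def by blast
  qed
  have G: "\<And>y. V1 y \<le> V y"
    using rec K1 mix_ge[OF pk] by (metis order_refl)
  have M: "\<And>a b. a \<le> b \<Longrightarrow> V b \<le> V a"
  proof -
    fix a b :: real assume ab: "a \<le> b"
    show "V b \<le> V a"
    proof (cases "b \<le> \<sigma> k")
      case True
      then have "a \<le> \<sigma> k" using ab by simp
      then show ?thesis using True rec M1[OF ab] by (simp add: add_left_mono mult_left_mono)
    next
      case False
      then have "V b = V1 b" using rec by simp
      also have "\<dots> \<le> V1 a" by (rule M1[OF ab])
      also have "\<dots> \<le> V a" by (rule G)
      finally show ?thesis .
    qed
  qed
  have K: "\<And>x s. x \<le> s \<Longrightarrow> s \<le> \<sigma> k \<Longrightarrow> V x \<le> (\<integral>\<^sup>+ D. (1 + V (s + D)) \<partial>F)"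
  proof -
    fix x s :: real assume xs: "x \<le> s" and s: "s \<le> \<sigma> k"
    have "V x = ennreal (p k) * Q + ennreal (1 - p k) * V1 x" using rec xs s by simp
    also have "\<dots> \<le> Q" using mix_le[OF pk K1] xs s by simp
    also have "Q \<le> (\<integral>\<^sup>+ D. (1 + V (s + D)) \<partial>F)"
      unfolding Q_def
    proof (rule nn_integral_mono)
      fix D :: real
      have "V1 (\<sigma> k + D) \<le> V (\<sigma> k + D)" by (rule G)
      also have "\<dots> \<le> V (s + D)" using M s by simp
      finally show "1 + V1 (\<sigma> k + D) \<le> 1 + V (s + D)" by (rule add_left_mono)
    qed
    finally show "V x \<le> (\<integral>\<^sup>+ D. (1 + V (s + D)) \<partial>F)" .
  qed
  show ?case using M K km unfolding V_def by blast
qed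


lemma Tmono:
  assumes F: "prob_space F" "sets F = sets borel"
    and sig: "\<And>t. Suc t < m \<Longrightarrow> \<sigma> t < \<sigma> (Suc t)"
    and p1: "\<And>t. t < m \<Longrightarrow> 0 \<le> p1 t \<and> p1 t \<le> 1"
    and p2: "\<And>t. t < m \<Longrightarrow> 0 \<le> p2 t \<and> p2 t \<le> 1"
    and p12: "\<And>t. t < m \<Longrightarrow> p1 t \<le> p2 t"
    and k: "k \<le> m"
  shows "\<forall>a. W F p1 \<sigma> m k a \<le> W F p2 \<sigma> m k a"
  using k
proof (induction "m - k" arbitrary: k)
  case 0
  then have "m \<le> k" by simp
  then show ?case by (simp add: W_end)
next
  case (Suc j)
  then have km: "k < m" by simp
  have pk1: "0 \<le> p1 k" "p1 k \<le> 1" using p1[OF km] by auto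
  have pk2: "0 \<le> p2 k" "p2 k \<le> 1" using p2[OF km] by auto
  have IH: "\<And>a. W F p1 \<sigma> m (Suc k) a \<le> W F p2 \<sigma> m (Suc k) a"
    using Suc by (metis Suc_diff_Suc Suc_leI diff_Suc_1 km)
  have MK2: "\<forall>x s. x \<le> s \<longrightarrow> (Suc k < m \<longrightarrow> s \<le> \<sigma> (Suc k)) \<longrightarrow> W F p2 \<sigma> m (Suc k) x \<le> (\<integral>\<^sup>+ D. (1 + W F p2 \<sigma> m (Suc k) (s + D)) \<partial>F)"
    using MK[where F=F and p=p2 and \<sigma>=\<sigma> and m=m and k="Suc k", OF F sig p2] km by simp
  show ?case
  proof
    fix a
    show "W F p1 \<sigma> m k a \<le> W F p2 \<sigma> m k a"
    proof (cases "a \<le> \<sigma> k")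
      case False
      then show ?thesis using W_rec[OF F km, of p1, OF pk1] W_rec[OF F km, of p2, OF pk2] IH by simp
    next
      case True
      define Q1 where "Q1 = (\<integral>\<^sup>+ D. (1 + W F p1 \<sigma> m (Suc k) (\<sigma> k + D)) \<partial>F)"
      define Q2 where "Q2 = (\<integral>\<^sup>+ D. (1 + W F p2 \<sigma> m (Suc k) (\<sigma> k + D)) \<partial>F)"
      have Q12: "Q1 \<le> Q2" unfolding Q1_def Q2_def
        by (rule nn_integral_mono) (simp add: IH add_left_mono)
      have X2: "W F p2 \<sigma> m (Suc k) a \<le> Q2"
      proof -
        have "Suc k < m \<longrightarrow> \<sigma> k \<le> \<sigma> (Suc k)" using sig less_imp_le by blast
        then show ?thesis using MK2 True unfolding Q2_def by blast
      qed
      have "W F p1 \<sigma> m k a = ennreal (p1 k) * Q1 + ennreal (1 - p1 k) * W F p1 \<sigma> m (Suc k) a"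
        using W_rec[OF F km, of p1, OF pk1] True Q1_def by simp
      also have "\<dots> \<le> ennreal (p1 k) * Q2 + ennreal (1 - p1 k) * W F p2 \<sigma> m (Suc k) a"
        using Q12 IH by (intro add_mono mult_left_mono) auto
      also have "\<dots> \<le> ennreal (p2 k) * Q2 + ennreal (1 - p2 k) * W F p2 \<sigma> m (Suc k) a"
        by (rule mix_mono[OF pk1(1) p12[OF km] pk2(2) X2])
      also have "\<dots> = W F p2 \<sigma> m k a"
        using W_rec[OF F km, of p2, OF pk2] True Q2_def by simp
      finally show ?thesis .
    qed
  qed
qed

lemma run_R: "real (snd (run_process \<sigma> \<omega> (j + n))) = real (snd (run_process \<sigma> \<omega> j)) + R \<sigma> j n (fst (run_process \<sigma> \<omega> j)) \<omega>"
proof (induction n arbitrary: j)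
  case 0
  then show ?case by simp
next
  case (Suc n)
  obtain a c where ac: "run_process \<sigma> \<omega> j = (a, c)" by fastforce
  have "j + Suc n = Suc j + n" by simp
  then show ?case using Suc.IH[of "Suc j"] ac by auto
qed

lemma ER_W:
  assumes F: "prob_space F" "sets F = sets borel"
  shows "expected_reward F m \<sigma> p = enn2real (W F p \<sigma> m 0 0)"
proof -
  have ps: "process_space F m p = PiM {0..<m} (MM F p)"
    unfolding process_space_def MM_def atLeast0LessThan by simp
  have eq: "\<And>\<omega>. real (snd (run_process \<sigma> \<omega> m)) = R \<sigma> 0 m 0 \<omega>"
    using run_R[of \<sigma> _ 0 m] by simp
  have meas: "(\<lambda>\<omega>. R \<sigma> 0 m 0 \<omega>) \<in> borel_measurable (PiM {0..<m} (MM F p))"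
    using R_meas[OF F(2), of 0 m "{0..<m}" "\<lambda>_. 0"] by simp
  have "expected_reward F m \<sigma> p = (\<integral>\<omega>. R \<sigma> 0 m 0 \<omega> \<partial>PiM {0..<m} (MM F p))"
    unfolding expected_reward_def ps eq ..
  also have "\<dots> = enn2real (\<integral>\<^sup>+ \<omega>. ennreal (R \<sigma> 0 m 0 \<omega>) \<partial>PiM {0..<m} (MM F p))"
    by (rule integral_eq_nn_integral[OF meas]) (simp add: R_nonneg)
  also have "\<dots> = enn2real (W F p \<sigma> m 0 0)" by (simp add: W_def)
  finally show ?thesis .
qed

lemma W_fin:
  assumes F: "prob_space F"
  shows "W F p \<sigma> m 0 0 < top"
proof -
  interpret PS: prob_space "PiM {0..<m} (MM F p)"
    by (rule prob_space_PiM) (rule MM_prob[OF F])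
  have "W F p \<sigma> m 0 0 \<le> (\<integral>\<^sup>+ \<omega>. ennreal (real m) \<partial>PiM {0..<m} (MM F p))"
    unfolding W_def by (rule nn_integral_mono) (simp add: R_le)
  also have "\<dots> = ennreal (real m)" by (simp add: PS.emeasure_space_1)
  finally show ?thesis using order.strict_trans1 by fastforce
qed

theorem lemma4:
  fixes F :: "real measure" and m :: nat and \<sigma> p1 p2 :: "nat \<Rightarrow> real"
  assumes "prob_space F" and "sets F = sets borel" and "AE x in F. 0 \<le> x"
    and "0 < \<sigma> 0" and "\<And>t. Suc t < m \<Longrightarrow> \<sigma> t < \<sigma> (Suc t)"
    and "\<And>t. t < m \<Longrightarrow> 0 \<le> p1 t \<and> p1 t \<le> 1"
    and "\<And>t. t < m \<Longrightarrow> 0 \<le> p2 t \<and> p2 t \<le> 1"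
    and "\<And>t. t < m \<Longrightarrow> p1 t \<le> p2 t"
  shows "expected_reward F m \<sigma> p1 \<le> expected_reward F m \<sigma> p2"
proof -
  have "W F p1 \<sigma> m 0 0 \<le> W F p2 \<sigma> m 0 0"
    using Tmono[of F m \<sigma> p1 p2 0, OF assms(1,2,5,6,7,8)] by simp
  then show ?thesis
    unfolding ER_W[OF assms(1,2)] by (rule enn2real_mono) (rule W_fin[OF assms(1)])
qed

end
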